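(* Let $\mathcal H=\{h_1,\dots,h_k\}$ be an admissible set of $k\ge 2$ distinct integers with $0\in\mathcal H$, let $0\le \ell_1,\ell_2\le k$, and let $p<R$ be prime. Then \[ U_1(p)=-\sum_{\substack{(r,A)=1\\(r,p)=1}}\frac{z^*_{r,p,\ell_1}y^*_{r,\ell_2}}{f_1^*(r)}-\frac{\nu_p^*}{p-1}\sum_{\substack{(r,A)=1\\(r,p)=1}}\frac{z^*_{r,p,\ell_1}z^*_{r,p,\ell_2}}{f_1^*(r)}, \] and \[ U_3(p)=\sum_{\substack{(r,A)=1\\(r,p)=1}}\frac{z^*_{r,p,\ell_1}z^*_{r,p,\ell_2}}{f_1^*(r)}. \]
   Context: $P(n;\mathcal H)=\prod_{h\in\mathcal H}(n+h)$. For squarefree $d$: - $\nu_d$ is the number of residues $a$ mod $d$ with $P(a;\mathcal H)\equiv0\pmod d$; - $\nu^*_d$ is the number of such $a$ that additionally satisfy $(a,d)=1$ (so $\nu^*_d=\prod_{p\mid d}(\nu_p-1)$). The set $\mathcal H$ is admissible if $\nu_p<p$ for all $p$. Let $\mathfrak S(\mathcal H)=\prod_p(1-\nu_p/p)(1-1/p)^{-k}$. For squarefree $d$, let $f(d)=d/\nu_d$ and $f_1(d)=\prod_{p\mid d}(p-\nu_p)/\nu_p$. For $R>1$, \[ \lambda_{d,\ell}=\mu(d)\frac{f(d)}{f_1(d)}\frac{\mathfrak S(\mathcal H)}{\ell!}\sum_{r<R/d,(r,d)=1}\frac{\mu^2(r)}{f_1(r)}(\log\tfrac R{rd})^\ell\quad\text{for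 } d<R, \] and $\lambda_{d,\ell}=0$ for $d\ge R$. Let $A$ be the product of the primes $p$ with $\nu^*_p=0$. For squarefree $r$ with $(r,A)=1$, let $f^*(r)=\phi(r)/\nu^*_r$ and $f_1^*(r)=\prod_{p\mid r}\frac{p-\nu_p}{\nu_p-1}$. Define \[ y^*_{r,\ell}=\mu(r)f_1^*(r)\sum_{(d,A)=1}\frac{\lambda_{dr,\ell}}{f^*(dr)}\quad\text{if } (r,A)=1,\ r<R, \] and $0$ otherwise. Define \[ z^*_{r,p,\ell}=\mu(pr)f_1^*(r)\sum_{(d,A)=1}\frac{\lambda_{drp,\ell}}{f^*(dr)}\quad\text{if } r<R/p,\ (r,A)=1, \] and $0$ otherwise. Finally, \[ U_1(p)=\sum_{d,e:\ p\mid d,\ p\nmid e}\frac{\lambda_{d,\ell_1}\lambda_{e,\ell_2}\nu^*_{[d,e]/p}}{\phi([d,e]/p)},\qquad U_3(p)=\sum_{d,e:\ p\mid d,\ p\mid e}\frac{\lambda_{d,\ell_1}\lambda_{e,\ell_2}\nu^*_{[d,e]/p}}{\phi([d,e]/p)}. \] *)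

theory Defs
  imports "HOL-Analysis.Analysis" "HOL-Number_Theory.Number_Theory" "HOL-Computational_Algebra.Squarefree"
begin

definition Ppoly :: "int set \<Rightarrow> int \<Rightarrow> int" where
  "Ppoly H n = (\<Prod>h\<in>H. n + h)"

definition nu :: "int set \<Rightarrow> nat \<Rightarrow> nat" where
  "nu H d = card {a \<in> {0..<d}. int d dvd Ppoly H (int a)}"

definition nustar :: "int set \<Rightarrow> nat \<Rightarrow> nat" where
  "nustar H d = card {a \<in> {0..<d}. int d dvd Ppoly H (int a) \<and> coprime a d}"

definition admissible :: "int set \<Rightarrow> bool" where
  "admissible H \<longleftrightarrow> (\<forall>p::nat. prime p \<longrightarrow> nu H p < p)"

definition mu :: "nat \<Rightarrow> real" where
  "mu n = (if n > 0 \<and> squarefree n then (-1) ^ card (prime_factors n) else 0)"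

definition singseries :: "int set \<Rightarrow> real" where
  "singseries H = (\<Prod>n. if prime n
      then (1 - real (nu H n) / real n) / (1 - 1 / real n) ^ card H else 1)"

definition f :: "int set \<Rightarrow> nat \<Rightarrow> real" where
  "f H d = real d / real (nu H d)"

definition f1 :: "int set \<Rightarrow> nat \<Rightarrow> real" where
  "f1 H d = (\<Prod>p\<in>prime_factors d. (real p - real (nu H p)) / real (nu H p))"

definition lam :: "int set \<Rightarrow> real \<Rightarrow> nat \<Rightarrow> nat \<Rightarrow> real" where
  "lam H R l d = (if 0 < d \<and> real d < R then
      mu d * f H d / f1 H d * singseries H / fact l *
      (\<Sum>r\<in>{r. 0 < r \<and> real r < R / real d \<and> coprime r d}.
          (mu r)^2 / f1 H r * (ln (R / (real r * real d))) ^ l)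
    else 0)"

definition Aprod :: "int set \<Rightarrow> nat" where
  "Aprod H = (\<Prod>{p. prime p \<and> nustar H p = 0})"

definition fstar :: "int set \<Rightarrow> nat \<Rightarrow> real" where
  "fstar H r = real (totient r) / real (nustar H r)"

definition f1star :: "int set \<Rightarrow> nat \<Rightarrow> real" where
  "f1star H r = (\<Prod>p\<in>prime_factors r. (real p - real (nu H p)) / (real (nu H p) - 1))"

text \<open>y*_{r,l}; the sum over d with (d,A)=1 is restricted to d r < R,
  outside of which lam vanishes.\<close>
definition ystar :: "int set \<Rightarrow> real \<Rightarrow> nat \<Rightarrow> nat \<Rightarrow> real" where
  "ystar H R l r = (if coprime r (Aprod H) \<and> real r < R then
      mu r * f1star H r *
      (\<Sum>d\<in>{d. 0 < d \<and> coprime d (Aprod H) \<and> real (d * r) < R}.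
          lam H R l (d * r) / fstar H (d * r))
    else 0)"

definition zstar :: "int set \<Rightarrow> real \<Rightarrow> nat \<Rightarrow> nat \<Rightarrow> nat \<Rightarrow> real" where
  "zstar H R l r p = (if real r < R / real p \<and> coprime r (Aprod H) then
      mu (p * r) * f1star H r *
      (\<Sum>d\<in>{d. 0 < d \<and> coprime d (Aprod H) \<and> real (d * r * p) < R}.
          lam H R l (d * r * p) / fstar H (d * r))
    else 0)"

text \<open>U_1 and U_3; d, e range over positive integers below R (lam vanishes otherwise).\<close>
definition U1 :: "int set \<Rightarrow> real \<Rightarrow> nat \<Rightarrow> nat \<Rightarrow> nat \<Rightarrow> real" where
  "U1 H R l1 l2 p = (\<Sum>(d, e)\<in>{(d, e). 0 < d \<and> 0 < e \<and> real d < R \<and> real e < R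
        \<and> p dvd d \<and> \<not> p dvd e}.
      lam H R l1 d * lam H R l2 e * real (nustar H (lcm d e div p))
        / real (totient (lcm d e div p)))"

definition U3 :: "int set \<Rightarrow> real \<Rightarrow> nat \<Rightarrow> nat \<Rightarrow> nat \<Rightarrow> real" where
  "U3 H R l1 l2 p = (\<Sum>(d, e)\<in>{(d, e). 0 < d \<and> 0 < e \<and> real d < R \<and> real e < R
        \<and> p dvd d \<and> p dvd e}.
      lam H R l1 d * lam H R l2 e * real (nustar H (lcm d e div p))
        / real (totient (lcm d e div p)))"

end

theory Submission imports Defs begin

lemma Ppoly_mod:
  assumes "a mod m = b mod m"
  shows "Ppoly H a mod m = Ppoly H b mod m"
proof -
  have "[Ppoly H a = Ppoly H b] (mod m)"
    unfolding Ppoly_def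
    by (rule cong_prod) (use assms in \<open>auto simp: cong_def intro: mod_add_cong\<close>)
  thus ?thesis by (simp add: cong_def)
qed

definition NS :: "int set \<Rightarrow> nat \<Rightarrow> nat set" where
  "NS H d = {a \<in> {0..<d}. int d dvd Ppoly H (int a) \<and> coprime a d}"

lemma nustar_NS: "nustar H d = card (NS H d)"
  by (simp add: nustar_def NS_def)

lemma dvd_Ppoly_mod:
  fixes m :: nat assumes "m > 0"
  shows "int m dvd Ppoly H (int (x mod m)) \<longleftrightarrow> int m dvd Ppoly H (int x)"
proof -
  have "int (x mod m) mod int m = int x mod int m" by (simp add: zmod_int)
  hence "Ppoly H (int (x mod m)) mod int m = Ppoly H (int x) mod int m" by (rule Ppoly_mod)
  thus ?thesis by (simp add: dvd_eq_mod_eq_0)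
qed

lemma NS_bij:
  fixes m n :: nat
  assumes mn: "coprime m n" "m > 0" "n > 0"
  shows "bij_betw (\<lambda>x. (x mod m, x mod n)) (NS H (m*n)) (NS H m \<times> NS H n)"
  unfolding bij_betw_def
proof
  show "inj_on (\<lambda>x. (x mod m, x mod n)) (NS H (m * n))"
  proof (intro inj_onI, clarify)
    fix x y assume xy: "x \<in> NS H (m * n)" "y \<in> NS H (m * n)"
                       "x mod m = y mod m" "x mod n = y mod n"
    have ex: "\<exists>!z. z < m * n \<and> [z = x] (mod m) \<and> [z = x] (mod n)"
      by (rule binary_chinese_remainder_unique_nat) (insert mn, simp_all)
    have "x < m * n \<and> [x = x] (mod m) \<and> [x = x] (mod n)"
         "y < m * n \<and> [y = x] (mod m) \<and> [y = x] (mod n)"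
      using xy mn by (simp_all add: NS_def cong_def)
    from this[THEN the1_equality[OF ex]] show "x = y" by simp
  qed
next
  show "(\<lambda>x. (x mod m, x mod n)) ` NS H (m * n) = NS H m \<times> NS H n"
  proof safe
    fix x assume x: "x \<in> NS H (m * n)"
    hence d: "int m * int n dvd Ppoly H (int x)" and c: "coprime x (m*n)" by (auto simp: NS_def)
    have "int m dvd Ppoly H (int x)" "int n dvd Ppoly H (int x)"
      using d dvd_mult_left dvd_mult_right by blast+
    moreover have "coprime x m" "coprime x n" using c by auto
    ultimately show "x mod m \<in> NS H m" "x mod n \<in> NS H n"
      using mn by (auto simp: NS_def dvd_Ppoly_mod coprime_mod_left_iff)
  next
    fix a b assume ab: "a \<in> NS H m" "b \<in> NS H n"
    from binary_chinese_remainder_unique_nat[OF mn(1), of a b] mn obtain x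
      where x: "x < m * n" "[x = a] (mod m)" "[x = b] (mod n)" by auto
    have xa: "x mod m = a" "x mod n = b" using x ab by (auto simp: cong_def NS_def)
    have "int m dvd Ppoly H (int x)" "int n dvd Ppoly H (int x)"
      using ab xa mn dvd_Ppoly_mod[of m H x] dvd_Ppoly_mod[of n H x] by (auto simp: NS_def)
    moreover have "coprime (int m) (int n)" using mn by simp
    ultimately have "int m * int n dvd Ppoly H (int x)" by (simp add: divides_mult)
    moreover have "coprime x m" "coprime x n"
      using ab xa mn by (auto simp: NS_def simp flip: coprime_mod_left_iff[of m x] coprime_mod_left_iff[of n x])
    ultimately have "x \<in> NS H (m*n)" using x by (auto simp: NS_def)
    with xa show "(a, b) \<in> (\<lambda>x. (x mod m, x mod n)) ` NS H (m*n)" by force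
  qed
qed

lemma nustar_mult:
  fixes m n :: nat
  assumes "coprime m n" "m > 0" "n > 0"
  shows "nustar H (m*n) = nustar H m * nustar H n"
  unfolding nustar_NS using bij_betw_same_card[OF NS_bij[OF assms, of H]] by (simp add: card_cartesian_product)

lemma nustar_1: "nustar H 1 = 1"
  by (simp add: nustar_def)

lemma Ppoly_0: assumes "finite H" "0 \<in> H" shows "Ppoly H 0 = 0"
  unfolding Ppoly_def using assms by (intro prod_zero) auto

lemma nustar_prime:
  assumes "finite H" "0 \<in> H" "prime q"
  shows "nustar H q + 1 = nu H q"
proof -
  have q: "q > 1" using assms prime_gt_1_nat by blast
  have "{a \<in> {0..<q}. int q dvd Ppoly H (int a)} = insert 0 (NS H q)"
  proof -
    have cop: "coprime x q" if "0 < x" "x < q" for x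
      by (metis assms(3) that prime_imp_coprime coprime_commute dvd_imp_le not_le)
    show ?thesis using assms q cop by (auto simp: NS_def Ppoly_0)
  qed
  moreover have "0 \<notin> NS H q" using q by (auto simp: NS_def)
  ultimately show ?thesis unfolding nu_def nustar_NS
    by (simp add: NS_def)
qed


lemma coprime_primes_iff:
  "coprime (a::nat) b \<longleftrightarrow> (\<forall>q. prime q \<longrightarrow> q dvd a \<longrightarrow> \<not> q dvd b)"
proof (intro iffI allI impI)
  fix q :: nat assume c: "coprime a b" and q: "prime q" "q dvd a"
  show "\<not> q dvd b"
  proof
    assume "q dvd b"
    hence "is_unit q" using coprime_common_divisor[OF c q(2)] by blast
    thus False using q(1) not_prime_unit by blast
  qed
next
  assume H: "\<forall>q. prime q \<longrightarrow> q dvd a \<longrightarrow> \<not> q dvd b"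
  show "coprime a b"
  proof (rule ccontr)
    assume "\<not> coprime a b"
    hence "gcd a b \<noteq> 1" using coprime_iff_gcd_eq_1 by blast
    then obtain q :: nat where q: "prime q" "q dvd gcd a b" using prime_factor_nat by blast
    hence "q dvd a" "q dvd b" using dvd_trans gcd_dvd1 gcd_dvd2 by blast+
    thus False using H q(1) by blast
  qed
qed

lemma Ppoly_neg_zero: "finite H \<Longrightarrow> h \<in> H \<Longrightarrow> Ppoly H (-h) = 0"
  unfolding Ppoly_def by (rule prod_zero) (auto intro!: bexI[of _ h])

lemma nu1_dvd:
  assumes "finite H" "0 \<in> H" "h \<in> H" "prime q" "nu H q = 1"
  shows "int q dvd h"
proof -
  have q1: "q > 1" using assms(4) prime_gt_1_nat by blast
  define a where "a = nat ((-h) mod int q)"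
  have a_int: "int a = (-h) mod int q" using q1 unfolding a_def by simp
  have "(-h) mod int q < int q" using q1 by simp
  hence aq: "a < q" using a_int by linarith
  have m: "int a mod int q = (-h) mod int q" by (simp only: a_int mod_mod_trivial)
  have "Ppoly H (int a) mod int q = Ppoly H (-h) mod int q" by (rule Ppoly_mod[OF m])
  hence "Ppoly H (int a) mod int q = 0" using Ppoly_neg_zero[OF assms(1,3)] by simp
  hence d1: "int q dvd Ppoly H (int a)" by (simp add: mod_0_imp_dvd)
  have d0: "int q dvd Ppoly H (int 0)" using Ppoly_0[OF assms(1,2)] by simp
  let ?S = "{a \<in> {0..<q}. int q dvd Ppoly H (int a)}"
  have "a \<in> ?S" using aq d1 by simp
  moreover have "0 \<in> ?S" using q1 d0 by simp
  ultimately have sub: "{0, a} \<subseteq> ?S" by blast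
  have fin: "finite ?S" by simp
  have "card {0, a} \<le> card ?S" by (rule card_mono[OF fin sub])
  also have "card ?S = 1" using assms(5) unfolding nu_def .
  finally have c: "card {0, a} \<le> 1" .
  have "a = 0"
  proof (rule ccontr)
    assume "a \<noteq> 0" hence "card {0, a} = 2" by simp
    thus False using c by simp
  qed
  hence "(-h) mod int q = 0" using a_int by simp
  hence "int q dvd (-h)" by (rule mod_0_imp_dvd)
  thus "int q dvd h" by (simp only: dvd_minus_iff)
qed

lemma Q_finite:
  assumes "finite H" "0 \<in> H" "card H \<ge> 2"
  shows "finite {q. prime q \<and> nustar H q = 0}"
proof -
  have "\<exists>h\<in>H. h \<noteq> 0"
  proof (rule ccontr)
    assume "\<not> (\<exists>h\<in>H. h \<noteq> 0)"
    hence "H \<subseteq> {0}" by auto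
    hence "card H \<le> card {0::int}" by (intro card_mono) auto
    thus False using assms(3) by simp
  qed
  then obtain h where h: "h \<in> H" "h \<noteq> 0" by blast
  have "{q. prime q \<and> nustar H q = 0} \<subseteq> {..nat \<bar>h\<bar>}"
  proof
    fix q assume "q \<in> {q. prime q \<and> nustar H q = 0}"
    hence q: "prime q" "nustar H q = 0" by auto
    have nu1: "nu H q = 1" using nustar_prime[OF assms(1,2) q(1)] q(2) by simp
    have "int q dvd h" by (rule nu1_dvd[OF assms(1,2) h(1) q(1) nu1])
    hence "\<bar>int q\<bar> \<le> \<bar>h\<bar>" by (rule dvd_imp_le_int[OF h(2)])
    hence "int q \<le> \<bar>h\<bar>" by simp
    thus "q \<in> {..nat \<bar>h\<bar>}" by simp
  qed
  thus ?thesis by (rule finite_subset) simp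
qed

lemma prime_dvd_Aprod:
  assumes "finite H" "0 \<in> H" "card H \<ge> 2" "prime q"
  shows "q dvd Aprod H \<longleftrightarrow> nustar H q = 0"
proof -
  let ?Q = "{q. prime q \<and> nustar H q = 0}"
  have fin: "finite ?Q" by (rule Q_finite[OF assms(1-3)])
  have "q dvd Aprod H \<longleftrightarrow> (\<exists>x\<in>?Q. q dvd x)"
    unfolding Aprod_def by (rule prime_dvd_prod_iff[OF fin assms(4)])
  also have "\<dots> \<longleftrightarrow> nustar H q = 0"
  proof
    assume "\<exists>x\<in>?Q. q dvd x"
    then obtain x where x: "prime x" "nustar H x = 0" "q dvd x" by blast
    have "q = x" by (rule primes_dvd_imp_eq[OF assms(4) x(1) x(3)])
    thus "nustar H q = 0" using x(2) by simp
  next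
    assume "nustar H q = 0" thus "\<exists>x\<in>?Q. q dvd x" using assms(4) by (intro bexI[of _ q]) auto
  qed
  finally show ?thesis .
qed

definition Gs :: "int set \<Rightarrow> nat \<Rightarrow> real" where
  "Gs H n = real (nustar H n) / real (totient n)"

lemma G_mult:
  assumes "coprime m n" "m > 0" "n > 0"
  shows "Gs H (m*n) = Gs H m * Gs H n"
  unfolding Gs_def using nustar_mult[OF assms] totient_mult_coprime[OF assms(1)] by simp

lemma G_1: "Gs H 1 = 1" unfolding Gs_def nustar_1 by simp

lemma G_prod:
  assumes "finite S" "\<And>q. q \<in> S \<Longrightarrow> prime q"
  shows "Gs H (\<Prod>S) = (\<Prod>q\<in>S. Gs H q)"
  using assms
proof (induction S rule: finite_induct)
  case empty show ?case by (metis G_1 prod.empty)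
next
  case (insert x F)
  have "coprime x (\<Prod>F)"
    using insert by (intro prod_coprime_right) (auto intro: primes_coprime)
  moreover have "\<Prod>F > 0" using insert by (simp add: prime_gt_0_nat prod_pos)
  moreover have "x > 0" using insert by (simp add: prime_gt_0_nat)
  ultimately show ?case using insert by (simp add: G_mult)
qed

lemma sqf_prod_pf:
  assumes "squarefree (n::nat)" "n > 0"
  shows "\<Prod>(prime_factors n) = n"
proof -
  have "n = (\<Prod>p \<in> prime_factors n. p ^ multiplicity p n)" using assms prime_factorization_nat by blast
  also have "\<dots> = \<Prod>(prime_factors n)"
    using assms by (intro prod.cong) (auto simp: squarefree_factorial_semiring')
  finally show ?thesis by simp
qed

lemma pf_prod_primes:
  assumes "finite S" "\<And>q. q \<in> S \<Longrightarrow> prime (q::nat)"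
  shows "prime_factors (\<Prod>S) = S"
proof -
  have "0 \<notin> (\<lambda>x. x) ` S" using assms(2) not_prime_0 by force
  hence "prime_factors (\<Prod>S) = \<Union>((prime_factors \<circ> (\<lambda>x. x)) ` S)"
    using prime_factors_prod[OF assms(1), of "\<lambda>x. x"] by blast
  also have "\<dots> = S" using assms by (auto simp: prime_prime_factors)
  finally show ?thesis .
qed

lemma G_sqf:
  assumes "squarefree (n::nat)" "n > 0"
  shows "Gs H n = (\<Prod>q\<in>prime_factors n. Gs H q)"
  by (metis G_prod finite_set_mset in_prime_factors_imp_prime sqf_prod_pf assms)


lemma Gs_prime_val:
  assumes "finite H" "0 \<in> H" "prime q"
  shows "Gs H q = (real (nu H q) - 1) / (real q - 1)"
proof -
  have e: "nustar H q + 1 = nu H q" by (rule nustar_prime[OF assms])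
  have "real (nustar H q + 1) = real (nu H q)" using e by simp
  hence a: "real (nustar H q) = real (nu H q) - 1" by simp
  have q1: "q \<ge> 1" using assms(3) prime_ge_1_nat by blast
  have "real (totient q) = real (q - 1)" using totient_prime[OF assms(3)] by simp
  also have "\<dots> = real q - 1" using q1 by (simp add: of_nat_diff)
  finally show ?thesis unfolding Gs_def a by simp
qed

lemma Gs_prime_zero:
  assumes "prime q"
  shows "Gs H q = 0 \<longleftrightarrow> nustar H q = 0"
proof -
  have "totient q > 0" using assms prime_gt_0_nat by simp
  thus ?thesis unfolding Gs_def by simp
qed

lemma Gs_zero_iff:
  assumes "finite H" "0 \<in> H" "card H \<ge> 2" "squarefree n" "n > 0"
  shows "Gs H n = 0 \<longleftrightarrow> \<not> coprime n (Aprod H)"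
proof -
  have "Gs H n = 0 \<longleftrightarrow> (\<exists>q\<in>prime_factors n. Gs H q = 0)"
    unfolding G_sqf[OF assms(4,5)] by (rule prod_zero_iff) simp
  also have "\<dots> \<longleftrightarrow> (\<exists>q\<in>prime_factors n. q dvd Aprod H)"
  proof (intro bex_cong refl)
    fix q assume "q \<in> prime_factors n"
    hence q: "prime q" by (simp add: in_prime_factors_iff)
    show "Gs H q = 0 \<longleftrightarrow> q dvd Aprod H"
      using Gs_prime_zero[OF q] prime_dvd_Aprod[OF assms(1-3) q] by simp
  qed
  also have "\<dots> \<longleftrightarrow> \<not> coprime n (Aprod H)"
  proof
    assume "\<exists>q\<in>prime_factors n. q dvd Aprod H"
    then obtain q where q: "q \<in> prime_factors n" "q dvd Aprod H" by blast
    have "prime q" "q dvd n" using q(1) by (simp_all add: in_prime_factors_iff)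
    thus "\<not> coprime n (Aprod H)" unfolding coprime_primes_iff using q(2) by blast
  next
    assume "\<not> coprime n (Aprod H)"
    then obtain q where q: "prime q" "q dvd n" "q dvd Aprod H"
      unfolding coprime_primes_iff by blast
    have "q \<in> prime_factors n" using q assms(5) by (simp add: in_prime_factors_iff)
    thus "\<exists>q\<in>prime_factors n. q dvd Aprod H" using q(3) by blast
  qed
  finally show ?thesis .
qed

definition cq :: "int set \<Rightarrow> nat \<Rightarrow> real" where
  "cq H q = (real q - real (nu H q)) / (real (nu H q) - 1)"

lemma f1star_cq: "f1star H r = (\<Prod>q\<in>prime_factors r. cq H q)"
  unfolding f1star_def cq_def ..

lemma divisors_sqf:
  assumes "squarefree (g::nat)" "g > 0"
  shows "{r. r dvd g} = (\<lambda>S. \<Prod>S) ` Pow (prime_factors g)"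
proof (intro equalityI subsetI)
  fix r assume "r \<in> {r. r dvd g}"
  hence r: "r dvd g" by simp
  have r0: "r > 0" using r assms(2) by (simp add: dvd_pos_nat)
  have sq: "squarefree r" by (rule squarefree_mono[OF r assms(1)])
  have e: "\<Prod>(prime_factors r) = r" by (rule sqf_prod_pf[OF sq r0])
  have sub: "prime_factors r \<subseteq> prime_factors g"
  proof
    fix q assume "q \<in> prime_factors r"
    hence "prime q" "q dvd r" by (simp_all add: in_prime_factors_iff)
    hence "prime q" "q dvd g" using r dvd_trans by blast+
    thus "q \<in> prime_factors g" using assms(2) by (simp add: in_prime_factors_iff)
  qed
  show "r \<in> (\<lambda>S. \<Prod>S) ` Pow (prime_factors g)"
    using e sub by (intro image_eqI[of _ _ "prime_factors r"]) simp_all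
next
  fix r assume "r \<in> (\<lambda>S. \<Prod>S) ` Pow (prime_factors g)"
  then obtain S where S: "S \<subseteq> prime_factors g" "r = \<Prod>S" by blast
  have "\<Prod>S dvd \<Prod>(prime_factors g)" by (rule prod_dvd_prod_subset[OF _ S(1)]) simp
  thus "r \<in> {r. r dvd g}" using S(2) sqf_prod_pf[OF assms] by simp
qed

lemma inj_prod_pf: "inj_on (\<lambda>S. \<Prod>S) (Pow (prime_factors (g::nat)))"
proof (rule inj_onI)
  fix S T assume S: "S \<in> Pow (prime_factors g)" and T: "T \<in> Pow (prime_factors g)"
    and e: "\<Prod>S = \<Prod>T"
  have fS: "finite S" by (rule finite_subset[of S "prime_factors g"]) (use S in auto)
  have fT: "finite T" by (rule finite_subset[of T "prime_factors g"]) (use T in auto)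
  have pS: "\<And>q. q \<in> S \<Longrightarrow> prime q" using S by (auto simp: in_prime_factors_iff)
  have pT: "\<And>q. q \<in> T \<Longrightarrow> prime q" using T by (auto simp: in_prime_factors_iff)
  have "S = prime_factors (\<Prod>S)" using pf_prod_primes[OF fS pS] by simp
  also have "\<dots> = prime_factors (\<Prod>T)" using e by simp
  also have "\<dots> = T" using pf_prod_primes[OF fT pT] by simp
  finally show "S = T" .
qed

lemma K_lemma:
  assumes "finite H" "0 \<in> H" "card H \<ge> 2" "squarefree g" "g > 0" "coprime g (Aprod H)"
  shows "(\<Sum>r\<in>{r. r dvd g}. f1star H r) * Gs H g = 1"
proof -
  let ?P = "prime_factors g"
  have "(\<Sum>r\<in>{r. r dvd g}. f1star H r) = (\<Sum>S\<in>Pow ?P. f1star H (\<Prod>S))"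
    unfolding divisors_sqf[OF assms(4,5)] by (simp add: sum.reindex[OF inj_prod_pf])
  also have "\<dots> = (\<Sum>S\<in>Pow ?P. (\<Prod>q\<in>S. cq H q))"
  proof (intro sum.cong refl)
    fix S assume S: "S \<in> Pow ?P"
    have fS: "finite S" by (rule finite_subset[of S "prime_factors g"]) (use S in auto)
    have pS: "\<And>q. q \<in> S \<Longrightarrow> prime q" using S by (auto simp: in_prime_factors_iff)
    show "f1star H (\<Prod>S) = (\<Prod>q\<in>S. cq H q)"
      using pf_prod_primes[OF fS pS] by (simp add: f1star_cq)
  qed
  also have "\<dots> = (\<Prod>q\<in>?P. cq H q + 1)"
    using prod_add[of ?P "cq H" "\<lambda>_. 1"] by simp
  finally have s: "(\<Sum>r\<in>{r. r dvd g}. f1star H r) = (\<Prod>q\<in>?P. cq H q + 1)" .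
  have "(\<Prod>q\<in>?P. cq H q + 1) * Gs H g = (\<Prod>q\<in>?P. (cq H q + 1) * Gs H q)"
    unfolding G_sqf[OF assms(4,5)] by (simp add: prod.distrib)
  also have "\<dots> = (\<Prod>q\<in>?P. 1)"
  proof (intro prod.cong refl)
    fix q assume qP: "q \<in> ?P"
    hence q: "prime q" "q dvd g" by (simp_all add: in_prime_factors_iff)
    have "\<not> q dvd Aprod H" using assms(6)[unfolded coprime_primes_iff] q by blast
    hence ns: "nustar H q \<noteq> 0" using prime_dvd_Aprod[OF assms(1-3) q(1)] by simp
    have e: "nustar H q + 1 = nu H q" by (rule nustar_prime[OF assms(1,2) q(1)])
    have nu2: "real (nu H q) - 1 \<noteq> 0" using ns e by linarith
    have q2: "real q - 1 \<noteq> 0" using q(1) prime_gt_1_nat by fastforce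
    have c1: "cq H q + 1 = (real q - 1) / (real (nu H q) - 1)"
      unfolding cq_def using nu2 by (simp add: field_simps)
    show "(cq H q + 1) * Gs H q = 1"
      unfolding Gs_prime_val[OF assms(1,2) q(1)] c1 using nu2 q2 by simp
  qed
  also have "\<dots> = 1" by simp
  finally show ?thesis using s by simp
qed

lemma squarefree_lcm_nat:
  assumes "squarefree (a::nat)" "squarefree b"
  shows "squarefree (lcm a b)"
proof -
  have a0: "a \<noteq> 0"
  proof assume "a = 0" thus False using assms(1) by simp qed
  have b0: "b \<noteq> 0"
  proof assume "b = 0" thus False using assms(2) by simp qed
  have l0: "lcm a b \<noteq> 0" using a0 b0 by simp
  show ?thesis unfolding squarefree_factorial_semiring''[OF l0]
  proof (intro allI impI)
    fix p :: nat assume p: "prime p"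
    have "multiplicity p a \<le> 1" using assms(1) p a0 squarefree_factorial_semiring'' by blast
    moreover have "multiplicity p b \<le> 1" using assms(2) p b0 squarefree_factorial_semiring'' by blast
    ultimately show "multiplicity p (lcm a b) \<le> 1" using multiplicity_lcm[OF a0 b0 p] by simp
  qed
qed

lemma CORE:
  assumes "finite H" "0 \<in> H" "card H \<ge> 2" "squarefree a" "squarefree b" "a > 0" "b > 0"
  shows "Gs H (lcm a b) = Gs H a * Gs H b *
           (\<Sum>r\<in>{r. r dvd gcd a b \<and> coprime r (Aprod H)}. f1star H r)"
proof -
  let ?g = "gcd a b" and ?A = "Aprod H"
  have g0: "?g > 0" using assms(6) by simp
  have sg: "squarefree ?g" by (rule squarefree_mono[OF gcd_dvd1 assms(4)])
  have sl: "squarefree (lcm a b)" by (rule squarefree_lcm_nat[OF assms(4,5)])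
  have l0: "lcm a b > 0" using assms(6,7) by (simp add: lcm_pos_nat)
  show ?thesis
  proof (cases "coprime ?g ?A")
    case True
    have "\<And>r. r dvd ?g \<Longrightarrow> coprime r ?A" by (rule coprime_divisors[OF _ dvd_refl True])
    hence set: "{r. r dvd ?g \<and> coprime r ?A} = {r. r dvd ?g}" by auto
    have K: "(\<Sum>r\<in>{r. r dvd ?g}. f1star H r) * Gs H ?g = 1"
      by (rule K_lemma[OF assms(1-3) sg g0 True])
    have fa: "finite (prime_factors a)" "finite (prime_factors b)" by simp_all
    have "Gs H (lcm a b) * Gs H ?g = Gs H a * Gs H b"
      unfolding G_sqf[OF sl l0] G_sqf[OF sg g0] G_sqf[OF assms(4,6)] G_sqf[OF assms(5,7)]
      using assms(6,7) prod.union_inter[OF fa, of "Gs H"] by simp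
    hence "Gs H (lcm a b) = Gs H a * Gs H b * (\<Sum>r\<in>{r. r dvd ?g}. f1star H r)"
    proof -
      assume h: "Gs H (lcm a b) * Gs H ?g = Gs H a * Gs H b"
      have "Gs H (lcm a b) = Gs H (lcm a b) * ((\<Sum>r\<in>{r. r dvd ?g}. f1star H r) * Gs H ?g)"
        using K by simp
      also have "\<dots> = (Gs H (lcm a b) * Gs H ?g) * (\<Sum>r\<in>{r. r dvd ?g}. f1star H r)"
        by (simp only: ac_simps)
      finally show ?thesis using h by simp
    qed
    thus ?thesis unfolding set .
  next
    case False
    have "\<not> coprime a ?A"
    proof
      assume "coprime a ?A"
      hence "coprime ?g ?A" by (rule coprime_divisors[OF gcd_dvd1 dvd_refl])
      thus False using False by simp
    qed
    hence za: "Gs H a = 0" using Gs_zero_iff[OF assms(1-3) assms(4,6)] by simp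
    have "\<not> coprime (lcm a b) ?A"
    proof
      assume "coprime (lcm a b) ?A"
      hence "coprime a ?A" by (rule coprime_divisors[OF dvd_lcm1 dvd_refl])
      thus False using \<open>\<not> coprime a ?A\<close> by simp
    qed
    hence "Gs H (lcm a b) = 0" using Gs_zero_iff[OF assms(1-3) sl l0] by simp
    thus ?thesis using za by simp
  qed
qed


lemma fin_R: "finite {d::nat. real d < R}"
proof (rule finite_subset[of _ "{..nat \<lceil>R\<rceil>}"])
  show "{d. real d < R} \<subseteq> {..nat \<lceil>R\<rceil>}"
  proof
    fix d assume "d \<in> {d. real d < R}"
    hence "real d < R" by simp
    hence "real d \<le> of_int \<lceil>R\<rceil>" using le_of_int_ceiling[of R] by linarith
    hence "int d \<le> \<lceil>R\<rceil>" by (metis of_int_le_iff of_int_of_nat_eq)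
    thus "d \<in> {..nat \<lceil>R\<rceil>}" by simp
  qed
qed simp

lemma REIX:
  fixes \<psi> :: "nat \<Rightarrow> real"
  assumes m: "m > 0" and van: "\<And>d. d > 0 \<Longrightarrow> \<not> coprime d A \<Longrightarrow> \<psi> (d*m) = 0"
  shows "(\<Sum>d\<in>{d. 0<d \<and> coprime d A \<and> real (d*m) < R}. \<psi> (d*m))
       = (\<Sum>n\<in>{n. 0<n \<and> real n < R \<and> m dvd n}. \<psi> n)"
proof -
  let ?Z = "{d. 0<d \<and> coprime d A \<and> real (d*m) < R}" and ?Z' = "{d. 0<d \<and> real (d*m) < R}"
  have fZ': "finite ?Z'"
  proof (rule finite_subset[OF _ fin_R[of R]])
    show "?Z' \<subseteq> {d. real d < R}"
    proof
      fix d assume d: "d \<in> ?Z'"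
      have "d \<le> d*m" using m by simp
      hence le: "real d \<le> real (d*m)" by (rule of_nat_mono)
      have h: "real (d*m) < R" using d by blast
      show "d \<in> {d. real d < R}" by (simp only: mem_Collect_eq) (rule le_less_trans[OF le h])
    qed
  qed
  have "(\<Sum>d\<in>?Z. \<psi> (d*m)) = (\<Sum>d\<in>?Z'. \<psi> (d*m))"
    by (rule sum.mono_neutral_left[OF fZ']) (auto intro!: van)
  also have "\<dots> = (\<Sum>n\<in>(\<lambda>d. d*m) ` ?Z'. \<psi> n)"
    using m by (subst sum.reindex) (auto simp: inj_on_def)
  also have "(\<lambda>d. d*m) ` ?Z' = {n. 0<n \<and> real n < R \<and> m dvd n}"
  proof (intro equalityI subsetI)
    fix n assume "n \<in> (\<lambda>d. d*m) ` ?Z'"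
    then obtain d where "d \<in> ?Z'" "n = d*m" by blast
    thus "n \<in> {n. 0<n \<and> real n < R \<and> m dvd n}" using m by simp
  next
    fix n assume n: "n \<in> {n. 0<n \<and> real n < R \<and> m dvd n}"
    then obtain k where k: "n = m*k" by (auto elim: dvdE)
    have "k > 0" using n k by (cases "k = 0") auto
    hence "k \<in> ?Z'" using n k by (simp add: mult.commute)
    thus "n \<in> (\<lambda>d. d*m) ` ?Z'" using k by (intro image_eqI[of _ _ k]) (simp_all add: mult.commute)
  qed
  finally show ?thesis .
qed

lemma lam_nsq: "\<not> squarefree d \<Longrightarrow> lam H R l d = 0"
  by (simp add: lam_def mu_def)

lemma mu_nsq: "\<not> squarefree d \<Longrightarrow> mu d = 0"
  by (simp add: mu_def)

lemma mu_sq: "squarefree r \<Longrightarrow> r > 0 \<Longrightarrow> (mu r)^2 = 1"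
  by (simp add: mu_def flip: power_mult)

lemma mu_pr:
  assumes "prime p" "coprime r p" "r > 0"
  shows "mu (p*r) = - mu r"
proof (cases "squarefree r")
  case True
  have cp: "coprime p r" using assms(2) by (simp add: coprime_commute)
  have sq: "squarefree (p*r)" by (rule squarefree_mult_coprime[OF cp squarefree_prime[OF assms(1)] True])
  have p0: "p \<noteq> 0" using assms(1) by auto
  have pf: "prime_factors (p*r) = insert p (prime_factors r)"
    using prime_factors_product[OF p0, of r] assms(3) prime_prime_factors[OF assms(1)] by simp
  have "p \<notin> prime_factors r"
  proof
    assume "p \<in> prime_factors r"
    hence "p dvd r" by (simp add: in_prime_factors_iff)
    hence "is_unit p" using cp coprime_common_divisor[OF cp dvd_refl] by blast
    thus False using assms(1) by simp
  qed
  hence "card (prime_factors (p*r)) = Suc (card (prime_factors r))" unfolding pf by simp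
  thus ?thesis using sq True assms(3) p0 by (simp add: mu_def)
next
  case False
  hence "\<not> squarefree (p*r)" using squarefree_multD(2)[of p r] by blast
  thus ?thesis using False by (simp add: mu_def)
qed

lemma div_fstar: "x / fstar H n = x * Gs H n"
  by (simp add: fstar_def Gs_def)

lemma f1star_nz:
  assumes "finite H" "0 \<in> H" "card H \<ge> 2" "admissible H" "r > 0" "coprime r (Aprod H)"
  shows "f1star H r \<noteq> 0"
proof -
  have "cq H q \<noteq> 0" if "q \<in> prime_factors r" for q
  proof -
  have q: "prime q" "q dvd r" using that by (simp_all add: in_prime_factors_iff)
  have "\<not> q dvd Aprod H" using assms(6)[unfolded coprime_primes_iff] q by blast
  hence ns: "nustar H q \<noteq> 0" using prime_dvd_Aprod[OF assms(1-3) q(1)] by simp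
  have e: "nustar H q + 1 = nu H q" by (rule nustar_prime[OF assms(1,2) q(1)])
  have lt: "nu H q < q" using assms(4) q(1) unfolding admissible_def by blast
  have "real (nu H q) - 1 \<noteq> 0" using ns e by linarith
  moreover have "real q - real (nu H q) \<noteq> 0" using lt by simp
  ultimately show "cq H q \<noteq> 0" unfolding cq_def by simp
  qed
  thus ?thesis unfolding f1star_cq by simp
qed


definition Zs :: "int set \<Rightarrow> real \<Rightarrow> nat \<Rightarrow> nat \<Rightarrow> nat \<Rightarrow> real" where
  "Zs H R l r p = (\<Sum>d\<in>{d. 0 < d \<and> coprime d (Aprod H) \<and> real (d * r * p) < R}.
          lam H R l (d * r * p) / fstar H (d * r))"

definition Ys :: "int set \<Rightarrow> real \<Rightarrow> nat \<Rightarrow> nat \<Rightarrow> real" where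
  "Ys H R l r = (\<Sum>d\<in>{d. 0 < d \<and> coprime d (Aprod H) \<and> real (d * r) < R}.
          lam H R l (d * r) / fstar H (d * r))"

lemma ystar_eq:
  assumes "coprime r (Aprod H)" "real r < R"
  shows "ystar H R l r = mu r * f1star H r * Ys H R l r"
  using assms by (simp add: ystar_def Ys_def)

lemma zstar_eq:
  assumes "prime p" "r > 0" "coprime r (Aprod H)"
  shows "zstar H R l r p = mu (p * r) * f1star H r * Zs H R l r p"
proof (cases "real r < R / real p")
  case True thus ?thesis using assms by (simp add: zstar_def Zs_def)
next
  case False
  have p0: "real p > 0" using assms(1) prime_gt_0_nat by simp
  have rp: "R \<le> real r * real p" using False p0 by (simp add: not_less pos_divide_le_eq)
  have E: "{d. 0 < d \<and> coprime d (Aprod H) \<and> real (d * r * p) < R} = {}"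
  proof (intro equalityI subsetI)
    fix d assume d: "d \<in> {d. 0 < d \<and> coprime d (Aprod H) \<and> real (d * r * p) < R}"
    hence d1: "d \<ge> 1" by simp
    have "r * p \<le> d * r * p" using d1 by simp
    hence "real (r * p) \<le> real (d * r * p)" by (rule of_nat_mono)
    moreover have "real (d * r * p) < R" using d by blast
    ultimately show "d \<in> {}" using rp by simp
  qed simp
  have "Zs H R l r p = 0" unfolding Zs_def E by simp
  thus ?thesis using False by (simp add: zstar_def)
qed

lemma sqf_notcop_zero:
  assumes "finite H" "0 \<in> H" "card H \<ge> 2" "squarefree n" "n > 0" "\<not> coprime n (Aprod H)"
  shows "Gs H n = 0"
  using Gs_zero_iff[OF assms(1-5)] assms(6) by simp

lemma Zs_alt:
  assumes "finite H" "0 \<in> H" "card H \<ge> 2" "prime p" "r > 0"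
  shows "Zs H R l r p = (\<Sum>n\<in>{n. 0<n \<and> real n < R \<and> r*p dvd n}. lam H R l n * Gs H (n div p))"
proof -
  let ?A = "Aprod H"
  let ?\<psi> = "\<lambda>n. lam H R l n * Gs H (n div p)"
  have p0: "p > 0" using assms(4) prime_gt_0_nat by simp
  have "Zs H R l r p = (\<Sum>d\<in>{d. 0<d \<and> coprime d ?A \<and> real (d*(r*p)) < R}. ?\<psi> (d*(r*p)))"
    unfolding Zs_def div_fstar
  proof (rule sum.cong)
    show "{d. 0 < d \<and> coprime d ?A \<and> real (d * r * p) < R} = {d. 0<d \<and> coprime d ?A \<and> real (d*(r*p)) < R}"
      by (simp add: mult.assoc)
  next
    fix d
    have "d * (r * p) div p = d * r" using p0 by (simp add: mult.assoc[symmetric])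
    thus "lam H R l (d * r * p) * Gs H (d * r) = ?\<psi> (d*(r*p))" by (simp add: mult.assoc)
  qed
  also have "\<dots> = (\<Sum>n\<in>{n. 0<n \<and> real n < R \<and> r*p dvd n}. ?\<psi> n)"
  proof (rule REIX)
    show "r * p > 0" using assms(5) p0 by simp
  next
    fix d assume d: "d > 0" "\<not> coprime d ?A"
    have e: "d * (r * p) div p = d * r" using p0 by (simp add: mult.assoc[symmetric])
    show "?\<psi> (d*(r*p)) = 0"
    proof (cases "squarefree (d*(r*p))")
      case True
      have "d * r dvd d * (r * p)" by simp
      hence sq: "squarefree (d*r)" using True squarefree_mono by blast
      have nc: "\<not> coprime (d*r) ?A" using d(2) by simp
      have "Gs H (d*r) = 0" by (rule sqf_notcop_zero[OF assms(1-3) sq _ nc]) (use d(1) assms(5) in simp)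
      thus ?thesis using e by simp
    next
      case False thus ?thesis by (simp add: lam_nsq)
    qed
  qed
  finally show ?thesis .
qed

lemma Ys_alt:
  assumes "finite H" "0 \<in> H" "card H \<ge> 2" "r > 0"
  shows "Ys H R l r = (\<Sum>n\<in>{n. 0<n \<and> real n < R \<and> r dvd n}. lam H R l n * Gs H n)"
  unfolding Ys_def div_fstar
proof (rule REIX[where \<psi> = "\<lambda>n. lam H R l n * Gs H n"])
  show "r > 0" by (rule assms(4))
next
  fix d assume d: "d > 0" "\<not> coprime d (Aprod H)"
  show "lam H R l (d * r) * Gs H (d * r) = 0"
  proof (cases "squarefree (d*r)")
    case True
    have nc: "\<not> coprime (d*r) (Aprod H)" using d(2) by simp
    have "Gs H (d*r) = 0" by (rule sqf_notcop_zero[OF assms(1-3) True _ nc]) (use d(1) assms(4) in simp)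
    thus ?thesis by simp
  next
    case False thus ?thesis by (simp add: lam_nsq)
  qed
qed

lemma sqf_p_coprime:
  fixes p n k :: nat
  assumes "squarefree n" "prime p" "n = p * k"
  shows "coprime k p"
proof -
  have "\<not> p dvd k"
  proof
    assume "p dvd k"
    hence "p*p dvd p*k" by (rule mult_dvd_mono[OF dvd_refl])
    hence "p^2 dvd n" using assms(3) by (simp add: power2_eq_square)
    hence "p dvd 1" using squarefreeD[OF assms(1)] by blast
    thus False using assms(2) by simp
  qed
  thus ?thesis using prime_imp_coprime[OF assms(2)] by (simp add: coprime_commute)
qed

lemma E2_sum:
  assumes "finite H" "0 \<in> H" "card H \<ge> 2" "prime p" "r > 0"
  shows "(\<Sum>n\<in>{n. 0<n \<and> real n < R \<and> r*p dvd n}. lam H R l n * Gs H n) = Gs H p * Zs H R l r p"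
proof -
  have p0: "p > 0" using assms(4) prime_gt_0_nat by simp
  have "Gs H p * Zs H R l r p = (\<Sum>n\<in>{n. 0<n \<and> real n < R \<and> r*p dvd n}. Gs H p * (lam H R l n * Gs H (n div p)))"
    unfolding Zs_alt[OF assms] by (simp add: sum_distrib_left)
  also have "\<dots> = (\<Sum>n\<in>{n. 0<n \<and> real n < R \<and> r*p dvd n}. lam H R l n * Gs H n)"
  proof (rule sum.cong[OF refl])
    fix n assume n: "n \<in> {n. 0<n \<and> real n < R \<and> r*p dvd n}"
    show "Gs H p * (lam H R l n * Gs H (n div p)) = lam H R l n * Gs H n"
    proof (cases "squarefree n")
      case True
      have "r*p dvd n" using n by blast
      hence "p dvd n" by (rule dvd_trans[OF dvd_triv_right])
      hence nk: "n = p * (n div p)" by simp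
      have cp: "coprime (n div p) p" by (rule sqf_p_coprime[OF True assms(4) nk])
      have k0: "n div p > 0" using n nk by (cases "n div p = 0") auto
      have "Gs H n = Gs H (n div p * p)" using nk by (simp add: mult.commute)
      also have "\<dots> = Gs H (n div p) * Gs H p" by (rule G_mult[OF cp k0 p0])
      finally show ?thesis by simp
    next
      case False thus ?thesis by (simp add: lam_nsq)
    qed
  qed
  finally show ?thesis by simp
qed

lemma lcm_p_left:
  fixes p a e :: nat
  assumes "prime p" "\<not> p dvd e" "a > 0" "e > 0"
  shows "lcm (p * a) e = p * lcm a e"
proof -
  have ce: "coprime e p" using prime_imp_coprime[OF assms(1,2)] by (simp add: coprime_commute)
  have g: "gcd (p * a) e = gcd a e" by (rule gcd_mult_left_left_cancel[OF ce])
  have h1: "gcd (p*a) e * lcm (p*a) e = p*a*e" by (rule prod_gcd_lcm_nat[symmetric])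
  have h2: "gcd a e * lcm a e = a*e" by (rule prod_gcd_lcm_nat[symmetric])
  have "gcd a e * lcm (p * a) e = p * (a * e)" using h1 unfolding g by (simp only: mult.assoc)
  also have "\<dots> = gcd a e * (p * lcm a e)" unfolding h2[symmetric] by (simp only: ac_simps)
  finally have eq: "gcd a e * lcm (p * a) e = gcd a e * (p * lcm a e)" .
  have gne: "gcd a e \<noteq> 0" using assms(3) by simp
  show ?thesis using mult_left_cancel[OF gne] eq by blast
qed

lemma dvd_div_p_iff:
  assumes "(p::nat) > 0"
  shows "(p dvd d \<and> r dvd d div p) \<longleftrightarrow> r * p dvd d"
proof
  assume h: "p dvd d \<and> r dvd d div p"
  then obtain k where k: "d = p * k" by (auto elim: dvdE)
  have "r dvd k" using h k assms by simp
  thus "r * p dvd d" using k by (simp add: mult.commute)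
next
  assume h: "r * p dvd d"
  then obtain j where j: "d = r * p * j" by (auto elim: dvdE)
  have "d div p = r * j" using j assms by simp
  thus "p dvd d \<and> r dvd d div p" using j by simp
qed


definition Bset :: "int set \<Rightarrow> real \<Rightarrow> nat \<Rightarrow> nat set" where
  "Bset H R p = {r. 0 < r \<and> coprime r (Aprod H) \<and> coprime r p \<and> real r < R}"

lemma fin_Bset: "finite (Bset H R p)"
  unfolding Bset_def by (rule finite_subset[OF _ fin_R[of R]]) auto

lemma set_gcd:
  assumes "0 < a" "real a < R" "coprime a p"
  shows "{r. r \<in> Bset H R p \<and> r dvd a \<and> r dvd b} = {r. r dvd gcd a b \<and> coprime r (Aprod H)}"
proof (intro equalityI subsetI)
  fix r assume "r \<in> {r. r \<in> Bset H R p \<and> r dvd a \<and> r dvd b}"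
  thus "r \<in> {r. r dvd gcd a b \<and> coprime r (Aprod H)}" by (simp add: Bset_def)
next
  fix r assume "r \<in> {r. r dvd gcd a b \<and> coprime r (Aprod H)}"
  hence r: "r dvd gcd a b" "coprime r (Aprod H)" by simp_all
  have ra: "r dvd a" "r dvd b" using r(1) by simp_all
  have r0: "r > 0" using ra(1) assms(1) by (cases "r = 0") auto
  have rp: "coprime r p" by (rule coprime_divisors[OF ra(1) dvd_refl assms(3)])
  have "r \<le> a" by (rule dvd_imp_le[OF ra(1) assms(1)])
  hence "real r \<le> real a" by (rule of_nat_mono)
  hence "real r < R" using assms(2) by linarith
  thus "r \<in> {r. r \<in> Bset H R p \<and> r dvd a \<and> r dvd b}" using r0 r(2) rp ra by (simp add: Bset_def)
qed

lemma Gs_frac: "x * real (nustar H n) / real (totient n) = x * Gs H n"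
  by (simp add: Gs_def)

lemma TERM1:
  assumes hyps: "finite H" "0 \<in> H" "card H \<ge> 2" "prime p"
    and d: "0 < d" "real d < R" "p dvd d" and e: "0 < e" "real e < R" "\<not> p dvd e"
  shows "lam H R l1 d * lam H R l2 e * real (nustar H (lcm d e div p)) / real (totient (lcm d e div p))
    = (\<Sum>r\<in>{r. r \<in> Bset H R p \<and> r dvd d div p \<and> r dvd e}.
          f1star H r * (lam H R l1 d * Gs H (d div p)) * (lam H R l2 e * Gs H e))"
proof (cases "squarefree d \<and> squarefree e")
  case False
  hence z: "lam H R l1 d * lam H R l2 e = 0" by (auto simp: lam_nsq)
  have eqn: "\<And>r. f1star H r * (lam H R l1 d * Gs H (d div p)) * (lam H R l2 e * Gs H e) = 
     f1star H r * (lam H R l1 d * lam H R l2 e) * Gs H (d div p) * Gs H e" by (simp only: ac_simps)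
  have R0: "(\<Sum>r\<in>{r. r \<in> Bset H R p \<and> r dvd d div p \<and> r dvd e}.
          f1star H r * (lam H R l1 d * Gs H (d div p)) * (lam H R l2 e * Gs H e)) = 0"
    unfolding eqn z by simp
  have L0: "lam H R l1 d * lam H R l2 e * real (nustar H (lcm d e div p)) / real (totient (lcm d e div p)) = 0"
    unfolding z by simp
  show ?thesis unfolding L0 R0 ..
next
  case True
  hence sqd: "squarefree d" and sqe: "squarefree e" by simp_all
  define a where "a = d div p"
  have da: "d = p * a" unfolding a_def using d(3) by simp
  have a0: "a > 0" using da d(1) by (cases "a = 0") auto
  have sqa: "squarefree a" using sqd da squarefree_multD(2) by blast
  have cap: "coprime a p" by (rule sqf_p_coprime[OF sqd hyps(4) da])
  have p0: "p > 0" using hyps(4) prime_gt_0_nat by simp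
  have "a \<le> d" using da p0 by simp
  hence "real a \<le> real d" by (rule of_nat_mono)
  hence aR: "real a < R" using d(2) by linarith
  have l: "lcm d e div p = lcm a e"
    using lcm_p_left[OF hyps(4) e(3) a0 e(1)] da hyps(4) prime_gt_0_nat by simp
  have "lam H R l1 d * lam H R l2 e * real (nustar H (lcm d e div p)) / real (totient (lcm d e div p))
      = lam H R l1 d * lam H R l2 e * Gs H (lcm a e)" unfolding l by (rule Gs_frac)
  also have "\<dots> = lam H R l1 d * lam H R l2 e * (Gs H a * Gs H e *
           (\<Sum>r\<in>{r. r dvd gcd a e \<and> coprime r (Aprod H)}. f1star H r))"
    unfolding CORE[OF hyps(1-3) sqa sqe a0 e(1)] ..
  also have "\<dots> = (lam H R l1 d * Gs H a) * (lam H R l2 e * Gs H e) *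
           (\<Sum>r\<in>{r. r \<in> Bset H R p \<and> r dvd a \<and> r dvd e}. f1star H r)"
    unfolding set_gcd[OF a0 aR cap] by (simp only: ac_simps)
  also have "\<dots> = (\<Sum>r\<in>{r. r \<in> Bset H R p \<and> r dvd a \<and> r dvd e}.
          f1star H r * (lam H R l1 d * Gs H a) * (lam H R l2 e * Gs H e))"
    by (simp add: sum_distrib_left sum_distrib_right ac_simps)
  finally show ?thesis unfolding a_def .
qed

lemma TERM3:
  assumes hyps: "finite H" "0 \<in> H" "card H \<ge> 2" "prime p"
    and d: "0 < d" "real d < R" "p dvd d" and e: "0 < e" "real e < R" "p dvd e"
  shows "lam H R l1 d * lam H R l2 e * real (nustar H (lcm d e div p)) / real (totient (lcm d e div p))
    = (\<Sum>r\<in>{r. r \<in> Bset H R p \<and> r dvd d div p \<and> r dvd e div p}.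
          f1star H r * (lam H R l1 d * Gs H (d div p)) * (lam H R l2 e * Gs H (e div p)))"
proof (cases "squarefree d \<and> squarefree e")
  case False
  hence z: "lam H R l1 d * lam H R l2 e = 0" by (auto simp: lam_nsq)
  have eqn: "\<And>r. f1star H r * (lam H R l1 d * Gs H (d div p)) * (lam H R l2 e * Gs H (e div p)) = 
     f1star H r * (lam H R l1 d * lam H R l2 e) * Gs H (d div p) * Gs H (e div p)" by (simp only: ac_simps)
  have R0: "(\<Sum>r\<in>{r. r \<in> Bset H R p \<and> r dvd d div p \<and> r dvd e div p}.
          f1star H r * (lam H R l1 d * Gs H (d div p)) * (lam H R l2 e * Gs H (e div p))) = 0"
    unfolding eqn z by simp
  have L0: "lam H R l1 d * lam H R l2 e * real (nustar H (lcm d e div p)) / real (totient (lcm d e div p)) = 0"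
    unfolding z by simp
  show ?thesis unfolding L0 R0 ..
next
  case True
  hence sqd: "squarefree d" and sqe: "squarefree e" by simp_all
  define a where "a = d div p"
  define b where "b = e div p"
  have p0: "p > 0" using hyps(4) prime_gt_0_nat by simp
  have da: "d = p * a" unfolding a_def using d(3) by simp
  have eb: "e = p * b" unfolding b_def using e(3) by simp
  have a0: "a > 0" using da d(1) by (cases "a = 0") auto
  have b0: "b > 0" using eb e(1) by (cases "b = 0") auto
  have sqa: "squarefree a" using sqd da squarefree_multD(2) by blast
  have sqb: "squarefree b" using sqe eb squarefree_multD(2) by blast
  have cap: "coprime a p" by (rule sqf_p_coprime[OF sqd hyps(4) da])
  have "a \<le> d" using da p0 by simp
  hence "real a \<le> real d" by (rule of_nat_mono)
  hence aR: "real a < R" using d(2) by linarith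
  have "lcm d e = p * lcm a b" unfolding da eb lcm_mult_left by simp
  hence l: "lcm d e div p = lcm a b" using p0 by simp
  have "lam H R l1 d * lam H R l2 e * real (nustar H (lcm d e div p)) / real (totient (lcm d e div p))
      = lam H R l1 d * lam H R l2 e * Gs H (lcm a b)" unfolding l by (rule Gs_frac)
  also have "\<dots> = lam H R l1 d * lam H R l2 e * (Gs H a * Gs H b *
           (\<Sum>r\<in>{r. r dvd gcd a b \<and> coprime r (Aprod H)}. f1star H r))"
    unfolding CORE[OF hyps(1-3) sqa sqb a0 b0] ..
  also have "\<dots> = (lam H R l1 d * Gs H a) * (lam H R l2 e * Gs H b) *
           (\<Sum>r\<in>{r. r \<in> Bset H R p \<and> r dvd a \<and> r dvd b}. f1star H r)"
    unfolding set_gcd[OF a0 aR cap] by (simp only: ac_simps)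
  also have "\<dots> = (\<Sum>r\<in>{r. r \<in> Bset H R p \<and> r dvd a \<and> r dvd b}.
          f1star H r * (lam H R l1 d * Gs H a) * (lam H R l2 e * Gs H b))"
    by (simp add: sum_distrib_left sum_distrib_right ac_simps)
  finally show ?thesis unfolding a_def b_def .
qed

lemma sum_prod_split:
  "(\<Sum>x\<in>A\<times>B. (u (fst x) :: real) * w (snd x)) = (\<Sum>a\<in>A. u a) * (\<Sum>b\<in>B. w b)"
  by (simp add: sum_product sum.cartesian_product case_prod_beta')


lemma E1_sum:
  assumes "finite H" "0 \<in> H" "card H \<ge> 2" "prime p" "r > 0" "coprime r p"
  shows "(\<Sum>e\<in>{e. 0<e \<and> real e < R \<and> \<not> p dvd e \<and> r dvd e}. lam H R l e * Gs H e)
           = Ys H R l r - Gs H p * Zs H R l r p"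
proof -
  let ?b = "\<lambda>e. lam H R l e * Gs H e"
  let ?E1 = "{e. 0<e \<and> real e < R \<and> \<not> p dvd e \<and> r dvd e}"
  let ?E2 = "{n. 0<n \<and> real n < R \<and> r*p dvd n}"
  let ?F = "{n. 0<n \<and> real n < R \<and> r dvd n}"
  have F: "?F = ?E1 \<union> ?E2"
  proof (intro equalityI subsetI)
    fix n assume n: "n \<in> ?F"
    show "n \<in> ?E1 \<union> ?E2"
    proof (cases "p dvd n")
      case True
      have "r dvd n" using n by blast
      hence "r * p dvd n" by (rule divides_mult[OF _ True assms(6)])
      thus ?thesis using n by blast
    next
      case False thus ?thesis using n by blast
    qed
  next
    fix n assume n: "n \<in> ?E1 \<union> ?E2"
    show "n \<in> ?F"
    proof (cases "n \<in> ?E1")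
      case True thus ?thesis by blast
    next
      case False
      hence n2: "n \<in> ?E2" using n by blast
      hence "r * p dvd n" by blast
      hence "r dvd n" by (rule dvd_trans[OF dvd_triv_left])
      thus ?thesis using n2 by blast
    qed
  qed
  have disj: "?E1 \<inter> ?E2 = {}"
  proof (rule ccontr)
    assume "?E1 \<inter> ?E2 \<noteq> {}"
    then obtain n where n1: "n \<in> ?E1" and n2: "n \<in> ?E2" by blast
    have "r * p dvd n" using n2 by blast
    hence "p dvd n" by (rule dvd_trans[OF dvd_triv_right])
    thus False using n1 by blast
  qed
  have f1: "finite ?E1" by (rule finite_subset[OF _ fin_R[of R]]) auto
  have f2: "finite ?E2" by (rule finite_subset[OF _ fin_R[of R]]) auto
  have "Ys H R l r = (\<Sum>n\<in>?F. ?b n)" by (rule Ys_alt[OF assms(1-3,5)])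
  also have "\<dots> = (\<Sum>n\<in>?E1. ?b n) + (\<Sum>n\<in>?E2. ?b n)"
    unfolding F by (rule sum.union_disjoint[OF f1 f2 disj])
  also have "(\<Sum>n\<in>?E2. ?b n) = Gs H p * Zs H R l r p" by (rule E2_sum[OF assms(1-5)])
  finally show ?thesis by simp
qed

lemma Zs_nsq:
  assumes "\<not> squarefree r"
  shows "Zs H R l r p = 0"
  unfolding Zs_def
proof (rule sum.neutral, rule ballI)
  fix d
  have "r dvd d * r * p" by simp
  hence "\<not> squarefree (d * r * p)" using assms squarefree_mono by blast
  thus "lam H R l (d * r * p) / fstar H (d * r) = 0" by (simp add: lam_nsq)
qed

lemma ALG1:
  assumes "finite H" "0 \<in> H" "card H \<ge> 2" "admissible H" "prime p" "r \<in> Bset H R p"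
  shows "f1star H r * Zs H R l1 r p * (Ys H R l2 r - Gs H p * Zs H R l2 r p)
      = - (zstar H R l1 r p * ystar H R l2 r / f1star H r)
        - Gs H p * (zstar H R l1 r p * zstar H R l2 r p / f1star H r)"
proof -
  have r: "r > 0" "coprime r (Aprod H)" "coprime r p" "real r < R" using assms(6) by (simp_all add: Bset_def)
  have z1: "zstar H R l1 r p = mu (p * r) * f1star H r * Zs H R l1 r p" by (rule zstar_eq[OF assms(5) r(1,2)])
  have z2: "zstar H R l2 r p = mu (p * r) * f1star H r * Zs H R l2 r p" by (rule zstar_eq[OF assms(5) r(1,2)])
  have y2: "ystar H R l2 r = mu r * f1star H r * Ys H R l2 r" by (rule ystar_eq[OF r(2,4)])
  show ?thesis
  proof (cases "squarefree r")
    case True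
    have fnz: "f1star H r \<noteq> 0" by (rule f1star_nz[OF assms(1-4) r(1,2)])
    have mp: "mu (p * r) = - mu r" by (rule mu_pr[OF assms(5) r(3,1)])
    have mm: "mu r * mu r = 1" using mu_sq[OF True r(1)] by (simp add: power2_eq_square)
    define m where "m = mu r"
    define f where "f = f1star H r"
    define Z1 where "Z1 = Zs H R l1 r p"
    define Z2 where "Z2 = Zs H R l2 r p"
    define Y where "Y = Ys H R l2 r"
    define G where "G = Gs H p"
    have mm': "m * m = 1" using mm m_def by simp
    have fnz': "f \<noteq> 0" using fnz f_def by simp
    have A: "(- m * f * Z1) * (m * f * Y) / f = - ((m * m) * (f * Z1 * Y))"
      using fnz' by (simp add: field_simps)
    have B: "(- m * f * Z1) * (- m * f * Z2) / f = (m * m) * (f * Z1 * Z2)"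
      using fnz' by (simp add: field_simps)
    have "f * Z1 * (Y - G * Z2) = - ((- m * f * Z1) * (m * f * Y) / f) - G * ((- m * f * Z1) * (- m * f * Z2) / f)"
      unfolding A B mm' by (simp add: algebra_simps)
    thus ?thesis unfolding z1 z2 y2 mp m_def f_def Z1_def Z2_def Y_def G_def .
  next
    case False
    have "\<not> squarefree (p * r)" using False squarefree_multD(2) by blast
    hence "mu (p * r) = 0" by (rule mu_nsq)
    thus ?thesis unfolding z1 z2 y2 Zs_nsq[OF False] by simp
  qed
qed

lemma ALG3:
  assumes "finite H" "0 \<in> H" "card H \<ge> 2" "admissible H" "prime p" "r \<in> Bset H R p"
  shows "f1star H r * Zs H R l1 r p * Zs H R l2 r p
      = zstar H R l1 r p * zstar H R l2 r p / f1star H r"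
proof -
  have r: "r > 0" "coprime r (Aprod H)" "coprime r p" "real r < R" using assms(6) by (simp_all add: Bset_def)
  have z1: "zstar H R l1 r p = mu (p * r) * f1star H r * Zs H R l1 r p" by (rule zstar_eq[OF assms(5) r(1,2)])
  have z2: "zstar H R l2 r p = mu (p * r) * f1star H r * Zs H R l2 r p" by (rule zstar_eq[OF assms(5) r(1,2)])
  show ?thesis
  proof (cases "squarefree r")
    case True
    have fnz: "f1star H r \<noteq> 0" by (rule f1star_nz[OF assms(1-4) r(1,2)])
    have mp: "mu (p * r) = - mu r" by (rule mu_pr[OF assms(5) r(3,1)])
    have mm: "mu r * mu r = 1" using mu_sq[OF True r(1)] by (simp add: power2_eq_square)
    define m where "m = mu r"
    define f where "f = f1star H r"
    define Z1 where "Z1 = Zs H R l1 r p"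
    define Z2 where "Z2 = Zs H R l2 r p"
    have mm': "m * m = 1" using mm m_def by simp
    have fnz': "f \<noteq> 0" using fnz f_def by simp
    have B: "(- m * f * Z1) * (- m * f * Z2) / f = (m * m) * (f * Z1 * Z2)"
      using fnz' by (simp add: field_simps)
    have "f * Z1 * Z2 = (- m * f * Z1) * (- m * f * Z2) / f"
      unfolding B mm' by simp
    thus ?thesis unfolding z1 z2 mp m_def f_def Z1_def Z2_def .
  next
    case False
    have "\<not> squarefree (p * r)" using False squarefree_multD(2) by blast
    hence "mu (p * r) = 0" by (rule mu_nsq)
    thus ?thesis unfolding z1 z2 Zs_nsq[OF False] by simp
  qed
qed

lemma Gs_p:
  assumes "prime p"
  shows "Gs H p = real (nustar H p) / (real p - 1)"
proof -
  have "p \<ge> 1" using assms prime_ge_1_nat by blast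
  hence "real (totient p) = real p - 1" using totient_prime[OF assms] by (simp add: of_nat_diff)
  thus ?thesis unfolding Gs_def by simp
qed


lemma prod_split_g:
  "(\<Sum>x\<in>A\<times>B. c * (u (fst x) :: real) * w (snd x)) = c * ((\<Sum>a\<in>A. u a) * (\<Sum>b\<in>B. w b))"
proof -
  have "(\<Sum>x\<in>A\<times>B. c * u (fst x) * w (snd x)) = c * (\<Sum>x\<in>A\<times>B. u (fst x) * w (snd x))"
    by (simp add: sum_distrib_left mult.assoc)
  thus ?thesis by (simp only: sum_prod_split)
qed

lemma U1_formula:
  assumes hyps: "finite H" "0 \<in> H" "card H \<ge> 2" "admissible H" "prime p"
  shows "U1 H R l1 l2 p =
      - (\<Sum>r\<in>Bset H R p. zstar H R l1 r p * ystar H R l2 r / f1star H r)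
      - real (nustar H p) / (real p - 1) *
        (\<Sum>r\<in>Bset H R p. zstar H R l1 r p * zstar H R l2 r p / f1star H r)"
proof -
  have p0: "p > 0" using hyps(5) prime_gt_0_nat by simp
  let ?D = "{(d, e). 0 < d \<and> 0 < e \<and> real d < R \<and> real e < R \<and> p dvd d \<and> \<not> p dvd e}"
  let ?g = "\<lambda>x r. f1star H r * (lam H R l1 (fst x) * Gs H (fst x div p)) * (lam H R l2 (snd x) * Gs H (snd x))"
  let ?P = "\<lambda>x r. r dvd fst x div p \<and> r dvd snd x"
  let ?B = "Bset H R p"
  have s1: "U1 H R l1 l2 p = (\<Sum>x\<in>?D. \<Sum>r\<in>{r. r \<in> ?B \<and> ?P x r}. ?g x r)"
    unfolding U1_def
  proof (rule sum.cong[OF refl])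
    fix x assume x: "x \<in> ?D"
    obtain d e where xde: "x = (d, e)" by (cases x)
    have de: "0 < d" "real d < R" "p dvd d" "0 < e" "real e < R" "\<not> p dvd e" using x xde by auto
    show "(case x of (d, e) \<Rightarrow> lam H R l1 d * lam H R l2 e * real (nustar H (lcm d e div p)) /
           real (totient (lcm d e div p))) = (\<Sum>r\<in>{r. r \<in> ?B \<and> ?P x r}. ?g x r)"
      unfolding xde using TERM1[OF hyps(1-3,5) de, of l1 l2] by simp
  qed
  have finD: "finite ?D"
    by (rule finite_subset[of _ "{d. real d < R} \<times> {e. real e < R}"]) (auto intro: fin_R)
  have s2: "(\<Sum>x\<in>?D. \<Sum>r\<in>{r. r \<in> ?B \<and> ?P x r}. ?g x r) = (\<Sum>r\<in>?B. \<Sum>x\<in>{x. x \<in> ?D \<and> ?P x r}. ?g x r)"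
    by (rule sum.swap_restrict[OF finD fin_Bset])
  have s3: "(\<Sum>x\<in>{x. x \<in> ?D \<and> ?P x r}. ?g x r) =
      f1star H r * Zs H R l1 r p * (Ys H R l2 r - Gs H p * Zs H R l2 r p)" if rB: "r \<in> ?B" for r
  proof -
    have r: "r > 0" "coprime r p" using rB by (simp_all add: Bset_def)
    let ?D1 = "{n. 0<n \<and> real n < R \<and> r*p dvd n}"
    let ?E1 = "{e. 0<e \<and> real e < R \<and> \<not> p dvd e \<and> r dvd e}"
    have set: "{x. x \<in> ?D \<and> ?P x r} = ?D1 \<times> ?E1"
      by (auto simp: dvd_div_p_iff[OF p0, symmetric])
    have "(\<Sum>x\<in>{x. x \<in> ?D \<and> ?P x r}. ?g x r) =
        (\<Sum>x\<in>?D1 \<times> ?E1. f1star H r * (lam H R l1 (fst x) * Gs H (fst x div p)) * (lam H R l2 (snd x) * Gs H (snd x)))"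
      unfolding set ..
    also have "\<dots> = f1star H r * ((\<Sum>d\<in>?D1. lam H R l1 d * Gs H (d div p)) * (\<Sum>e\<in>?E1. lam H R l2 e * Gs H e))"
      by (rule prod_split_g)
    also have "(\<Sum>d\<in>?D1. lam H R l1 d * Gs H (d div p)) = Zs H R l1 r p"
      by (rule Zs_alt[OF hyps(1-3,5) r(1), symmetric])
    also have "(\<Sum>e\<in>?E1. lam H R l2 e * Gs H e) = Ys H R l2 r - Gs H p * Zs H R l2 r p"
      by (rule E1_sum[OF hyps(1-3,5) r])
    finally show ?thesis by (simp only: mult.assoc)
  qed
  have "U1 H R l1 l2 p = (\<Sum>r\<in>?B. f1star H r * Zs H R l1 r p * (Ys H R l2 r - Gs H p * Zs H R l2 r p))"
    unfolding s1 s2 by (rule sum.cong[OF refl]) (rule s3)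
  also have "\<dots> = (\<Sum>r\<in>?B. - (zstar H R l1 r p * ystar H R l2 r / f1star H r)
        - Gs H p * (zstar H R l1 r p * zstar H R l2 r p / f1star H r))"
    by (rule sum.cong[OF refl]) (rule ALG1[OF hyps])
  also have "\<dots> = - (\<Sum>r\<in>?B. zstar H R l1 r p * ystar H R l2 r / f1star H r)
      - Gs H p * (\<Sum>r\<in>?B. zstar H R l1 r p * zstar H R l2 r p / f1star H r)"
    by (simp add: sum_subtractf sum_negf sum_distrib_left)
  finally show ?thesis unfolding Gs_p[OF hyps(5)] .
qed

lemma U3_formula:
  assumes hyps: "finite H" "0 \<in> H" "card H \<ge> 2" "admissible H" "prime p"
  shows "U3 H R l1 l2 p =
        (\<Sum>r\<in>Bset H R p. zstar H R l1 r p * zstar H R l2 r p / f1star H r)"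
proof -
  have p0: "p > 0" using hyps(5) prime_gt_0_nat by simp
  let ?D = "{(d, e). 0 < d \<and> 0 < e \<and> real d < R \<and> real e < R \<and> p dvd d \<and> p dvd e}"
  let ?g = "\<lambda>x r. f1star H r * (lam H R l1 (fst x) * Gs H (fst x div p)) * (lam H R l2 (snd x) * Gs H (snd x div p))"
  let ?P = "\<lambda>x r. r dvd fst x div p \<and> r dvd snd x div p"
  let ?B = "Bset H R p"
  have s1: "U3 H R l1 l2 p = (\<Sum>x\<in>?D. \<Sum>r\<in>{r. r \<in> ?B \<and> ?P x r}. ?g x r)"
    unfolding U3_def
  proof (rule sum.cong[OF refl])
    fix x assume x: "x \<in> ?D"
    obtain d e where xde: "x = (d, e)" by (cases x)
    have de: "0 < d" "real d < R" "p dvd d" "0 < e" "real e < R" "p dvd e" using x xde by auto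
    show "(case x of (d, e) \<Rightarrow> lam H R l1 d * lam H R l2 e * real (nustar H (lcm d e div p)) /
           real (totient (lcm d e div p))) = (\<Sum>r\<in>{r. r \<in> ?B \<and> ?P x r}. ?g x r)"
      unfolding xde using TERM3[OF hyps(1-3,5) de, of l1 l2] by simp
  qed
  have finD: "finite ?D"
    by (rule finite_subset[of _ "{d. real d < R} \<times> {e. real e < R}"]) (auto intro: fin_R)
  have s2: "(\<Sum>x\<in>?D. \<Sum>r\<in>{r. r \<in> ?B \<and> ?P x r}. ?g x r) = (\<Sum>r\<in>?B. \<Sum>x\<in>{x. x \<in> ?D \<and> ?P x r}. ?g x r)"
    by (rule sum.swap_restrict[OF finD fin_Bset])
  have s3: "(\<Sum>x\<in>{x. x \<in> ?D \<and> ?P x r}. ?g x r) =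
      f1star H r * Zs H R l1 r p * Zs H R l2 r p" if rB: "r \<in> ?B" for r
  proof -
    have r: "r > 0" "coprime r p" using rB by (simp_all add: Bset_def)
    let ?D1 = "{n. 0<n \<and> real n < R \<and> r*p dvd n}"
    have set: "{x. x \<in> ?D \<and> ?P x r} = ?D1 \<times> ?D1"
      by (auto simp: dvd_div_p_iff[OF p0, symmetric])
    have "(\<Sum>x\<in>{x. x \<in> ?D \<and> ?P x r}. ?g x r) =
        (\<Sum>x\<in>?D1 \<times> ?D1. f1star H r * (lam H R l1 (fst x) * Gs H (fst x div p)) * (lam H R l2 (snd x) * Gs H (snd x div p)))"
      unfolding set ..
    also have "\<dots> = f1star H r * ((\<Sum>d\<in>?D1. lam H R l1 d * Gs H (d div p)) * (\<Sum>e\<in>?D1. lam H R l2 e * Gs H (e div p)))"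
      by (rule prod_split_g)
    also have "(\<Sum>d\<in>?D1. lam H R l1 d * Gs H (d div p)) = Zs H R l1 r p"
      by (rule Zs_alt[OF hyps(1-3,5) r(1), symmetric])
    also have "(\<Sum>e\<in>?D1. lam H R l2 e * Gs H (e div p)) = Zs H R l2 r p"
      by (rule Zs_alt[OF hyps(1-3,5) r(1), symmetric])
    finally show ?thesis by (simp only: mult.assoc)
  qed
  have "U3 H R l1 l2 p = (\<Sum>r\<in>?B. f1star H r * Zs H R l1 r p * Zs H R l2 r p)"
    unfolding s1 s2 by (rule sum.cong[OF refl]) (rule s3)
  also have "\<dots> = (\<Sum>r\<in>?B. zstar H R l1 r p * zstar H R l2 r p / f1star H r)"
    by (rule sum.cong[OF refl]) (rule ALG3[OF hyps])
  finally show ?thesis .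
qed

theorem lemma13:
  fixes H :: "int set" and R :: real and l1 l2 p :: nat
  assumes "finite H" and "card H \<ge> 2" and "0 \<in> H" and "admissible H"
    and "l1 \<le> card H" and "l2 \<le> card H"
    and "R > 1" and "prime p" and "real p < R"
  shows "(U1 H R l1 l2 p =
      - (\<Sum>r\<in>{r. 0 < r \<and> coprime r (Aprod H) \<and> coprime r p \<and> real r < R}.
           zstar H R l1 r p * ystar H R l2 r / f1star H r)
      - real (nustar H p) / (real p - 1) *
        (\<Sum>r\<in>{r. 0 < r \<and> coprime r (Aprod H) \<and> coprime r p \<and> real r < R}.
           zstar H R l1 r p * zstar H R l2 r p / f1star H r)) \<and>
        (U3 H R l1 l2 p =
        (\<Sum>r\<in>{r. 0 < r \<and> coprime r (Aprod H) \<and> coprime r p \<and> real r < R}.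
           zstar H R l1 r p * zstar H R l2 r p / f1star H r))"
  using U1_formula[OF assms(1,3,2,4,8), of R l1 l2] U3_formula[OF assms(1,3,2,4,8), of R l1 l2]
  unfolding Bset_def by simp

end
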